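(* Let $d$ be a defined $n$-ary operator whose $i$-th argument position is Leibniz, for some $i\in\{1,\ldots,n\}$. Let $e_1,\ldots,e_n$ be any expressions, $\mathcal{M}$ a Kripke model, $w$ a state, and $x$ a rigid variable not occurring free in any $e_j$. Then $$[\![d(e_1,\ldots,e_n)]\!]^\mathcal{M}_w=[\![d(e_1,\ldots,e_{i-1},x,e_{i+1},\ldots,e_n)]\!]^{\mathcal{M}'}_w,$$ where $\mathcal{M}'$ agrees with $\mathcal{M}$ except that its valuation of rigid variables maps $x$ to $[\![e_i]\!]^\mathcal{M}_w$.
   Context: FOML syntax. Fix disjoint, non-empty, denumerable sets $\mathcal{X}$ (rigid variables), $\mathcal{V}$ (flexible variables) and $\mathcal{O}$ (operator symbols with arities). Expressions are given by $e ::= x \mid v \mid op(e,\ldots,e) \mid e=e \mid \mathrm{FALSE} \mid e\Rightarrow e \mid \forall x:e \mid \nabla e \mid d(e,\ldots,e)$, where $d$ ranges over defined operators. Only rigid variables are bound. Operator definitions. A definition has the form $d(x_1,\ldots,x_n)\triangleq e$, where: - $d$ is a fresh symbol; - $x_1,\ldots,x_n$ are pairwise distinct rigid variables; - $e$ is an expression, possibly using flexible variables and previously defined operators, whose free rigid variables are among $x_1,\ldots,x_n$. Leibniz argument positions. These are defined inductively. - All argument positions of operators in $\mathcal{O}$, and of all connectives other than $\nabla$ (that is, $=$, $\Rightarrow$, $\forall$), are Leibniz. The argument position of $\nabla$ is not Leibniz. - For $d(x_1,\ldots,x_n)\triangleq e$, the $i$-th argument position of $d$ is Leibniz iff $x_i$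 does not occur within a non-Leibniz argument position in $e$. Semantics. A Kripke model is $\mathcal{M}=(\mathcal{I},\xi,\mathcal{W},R,\zeta,\nabla_\mathcal{M})$, where: - $\mathcal{I}$ is a first-order interpretation with distinct values $\mathsf{tt},\mathsf{ff}$ in its universe; - $\xi:\mathcal{X}\to|\mathcal{I}|$; - $\mathcal{W}$ is a non-empty set of states and $R\subseteq\mathcal{W}^2$; - $\zeta:\mathcal{V}\times\mathcal{W}\to|\mathcal{I}|$; - $\nabla_\mathcal{M}:2^{|\mathcal{I}|}\to|\mathcal{I}|$ satisfies $\nabla_\mathcal{M}(S)=\mathsf{tt}$ iff $S\subseteq\{\mathsf{tt}\}$. Values are defined as follows. - $[\![x]\!]_w=\xi(x)$ and $[\![v]\!]_w=\zeta(v,w)$. - $[\![op(\vec e)]\!]_w=\mathcal{I}(op)(\ldots)$. - $[\![e_1=e_2]\!]_w$ is $\mathsf{tt}$ iff the values are equal, and $\mathsf{ff}$ otherwise. - $[\![\mathrm{FALSE}]\!]_w=\mathsf{ff}$. - $[\![\varphi\Rightarrow\psi]\!]_w=\mathsf{tt}$ iff $[\![\varphi]\!]_w\ne\mathsf{tt}$ or $[\![\psi]\!]_w=\mathsf{tt}$, and $\mathsf{ff}$ otherwise. - $\forall$ quantifies over the rigid variable valuation only, as usual. - $[\![\nabla\varphi]\!]_w=\nabla_\mathcal{M}(\{[\![\varphi]\!]_{w'}:(w,w')\in R\})$. - For $d(x_1,\ldots,x_n)\triangleq e$, $[\![d(e_1,\ldots,e_n)]\!]^\mathcal{M}_w=[\![e[e_1/x_1,\ldots,e_n/x_n]]\!]^\mathcal{M}_w$,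 using capture-avoiding substitution. *)

theory Defs
  imports Main "HOL-Library.Countable_Set"
begin

text \<open>Rigid variables 'x, flexible variables 'v, operator symbols 'o.
  Defined operators are referred to by their index (a natural number) into a
  list of definitions; the k-th definition may only use definitions with
  smaller index.\<close>

datatype ('x, 'v, 'o) expr =
    RVar 'x
  | FVar 'v
  | Op 'o "('x, 'v, 'o) expr list"
  | Eq "('x, 'v, 'o) expr" "('x, 'v, 'o) expr"
  | FALSE
  | Imp "('x, 'v, 'o) expr" "('x, 'v, 'o) expr"
  | All 'x "('x, 'v, 'o) expr"
  | Nabla "('x, 'v, 'o) expr"
  | Def nat "('x, 'v, 'o) expr list"

text \<open>A definition d(x_1,...,x_n) == e is the pair ([x_1,...,x_n], e).\<close>
type_synonym ('x, 'v, 'o) defn = "'x list \<times> ('x, 'v, 'o) expr"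

fun fv :: "('x, 'v, 'o) expr \<Rightarrow> 'x set" where
  "fv (RVar x) = {x}"
| "fv (FVar v) = {}"
| "fv (Op p es) = (\<Union>e\<in>set es. fv e)"
| "fv (Eq a b) = fv a \<union> fv b"
| "fv FALSE = {}"
| "fv (Imp a b) = fv a \<union> fv b"
| "fv (All x a) = fv a - {x}"
| "fv (Nabla a) = fv a"
| "fv (Def k es) = (\<Union>e\<in>set es. fv e)"

fun wf_expr :: "('o \<Rightarrow> nat) \<Rightarrow> nat list \<Rightarrow> ('x, 'v, 'o) expr \<Rightarrow> bool" where
  "wf_expr ar A (RVar x) = True"
| "wf_expr ar A (FVar v) = True"
| "wf_expr ar A (Op p es) = (length es = ar p \<and> (\<forall>e\<in>set es. wf_expr ar A e))"
| "wf_expr ar A (Eq a b) = (wf_expr ar A a \<and> wf_expr ar A b)"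
| "wf_expr ar A FALSE = True"
| "wf_expr ar A (Imp a b) = (wf_expr ar A a \<and> wf_expr ar A b)"
| "wf_expr ar A (All x a) = wf_expr ar A a"
| "wf_expr ar A (Nabla a) = wf_expr ar A a"
| "wf_expr ar A (Def k es) = (k < length A \<and> length es = A ! k \<and> (\<forall>e\<in>set es. wf_expr ar A e))"

definition def_arities :: "('x, 'v, 'o) defn list \<Rightarrow> nat list" where
  "def_arities D = map (length \<circ> fst) D"

definition wf_defs :: "('o \<Rightarrow> nat) \<Rightarrow> ('x, 'v, 'o) defn list \<Rightarrow> bool" where
  "wf_defs ar D = (\<forall>k < length D.
      distinct (fst (D ! k)) \<and> fv (snd (D ! k)) \<subseteq> set (fst (D ! k)) \<and>
      wf_expr ar (def_arities (take k D)) (snd (D ! k)))"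

definition fresh_for :: "'x \<Rightarrow> 'x set \<Rightarrow> 'x" where
  "fresh_for x S = (if x \<notin> S then x else (SOME y. y \<notin> S))"

fun subst :: "('x, 'v, 'o) expr \<Rightarrow> ('x \<Rightarrow> ('x, 'v, 'o) expr) \<Rightarrow> ('x, 'v, 'o) expr" where
  "subst (RVar x) \<sigma> = \<sigma> x"
| "subst (FVar v) \<sigma> = FVar v"
| "subst (Op p es) \<sigma> = Op p (map (\<lambda>e. subst e \<sigma>) es)"
| "subst (Eq a b) \<sigma> = Eq (subst a \<sigma>) (subst b \<sigma>)"
| "subst FALSE \<sigma> = FALSE"
| "subst (Imp a b) \<sigma> = Imp (subst a \<sigma>) (subst b \<sigma>)"
| "subst (All x a) \<sigma> =
     (let y = fresh_for x (\<Union>z\<in>fv a - {x}. fv (\<sigma> z))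
      in All y (subst a (\<sigma>(x := RVar y))))"
| "subst (Nabla a) \<sigma> = Nabla (subst a \<sigma>)"
| "subst (Def k es) \<sigma> = Def k (map (\<lambda>e. subst e \<sigma>) es)"

definition mk_subst :: "'x list \<Rightarrow> ('x, 'v, 'o) expr list \<Rightarrow> 'x \<Rightarrow> ('x, 'v, 'o) expr" where
  "mk_subst xs es z = (case map_of (zip xs es) z of Some e \<Rightarrow> e | None \<Rightarrow> RVar z)"

text \<open>L ! k ! j says whether the j-th argument position of the k-th defined
  operator is Leibniz.  nonleib L y e: the rigid variable y occurs (free)
  within a non-Leibniz argument position in e.\<close>
fun nonleib :: "bool list list \<Rightarrow> 'x \<Rightarrow> ('x, 'v, 'o) expr \<Rightarrow> bool" where
  "nonleib L y (RVar z) = False"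
| "nonleib L y (FVar v) = False"
| "nonleib L y (Op p es) = (\<exists>e\<in>set es. nonleib L y e)"
| "nonleib L y (Eq a b) = (nonleib L y a \<or> nonleib L y b)"
| "nonleib L y FALSE = False"
| "nonleib L y (Imp a b) = (nonleib L y a \<or> nonleib L y b)"
| "nonleib L y (All z a) = (z \<noteq> y \<and> nonleib L y a)"
| "nonleib L y (Nabla a) = (y \<in> fv a)"
| "nonleib L y (Def k es) =
     ((\<exists>e\<in>set es. nonleib L y e) \<or>
      (\<exists>j < length es. y \<in> fv (es ! j) \<and> \<not> (k < length L \<and> j < length (L ! k) \<and> L ! k ! j)))"

definition leib_flags :: "('x, 'v, 'o) defn list \<Rightarrow> bool list list" where
  "leib_flags D = foldl (\<lambda>L d. L @ [map (\<lambda>p. \<not> nonleib L p (snd d)) (fst d)]) [] D"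

definition leibniz :: "('x, 'v, 'o) defn list \<Rightarrow> nat \<Rightarrow> nat \<Rightarrow> bool" where
  "leibniz D k i = (k < length D \<and> i < length (fst (D ! k)) \<and> leib_flags D ! k ! i)"

record ('o, 'x, 'v, 'w, 'u) kmodel =
  interp :: "'o \<Rightarrow> 'u list \<Rightarrow> 'u"
  tt :: 'u
  ff :: 'u
  xi :: "'x \<Rightarrow> 'u"
  states :: "'w set"
  acc :: "('w \<times> 'w) set"
  zeta :: "'v \<Rightarrow> 'w \<Rightarrow> 'u"
  nab :: "'u set \<Rightarrow> 'u"

definition kripke_model :: "('o, 'x, 'v, 'w, 'u) kmodel \<Rightarrow> bool" where
  "kripke_model M = (tt M \<noteq> ff M \<and> states M \<noteq> {} \<and> acc M \<subseteq> states M \<times> states M \<and>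
     (\<forall>S. nab M S = tt M \<longleftrightarrow> S \<subseteq> {tt M}))"

text \<open>Values of expressions without defined operators.\<close>
fun eval :: "('o, 'x, 'v, 'w, 'u) kmodel \<Rightarrow> 'w \<Rightarrow> ('x, 'v, 'o) expr \<Rightarrow> 'u" where
  "eval M w (RVar x) = xi M x"
| "eval M w (FVar v) = zeta M v w"
| "eval M w (Op p es) = interp M p (map (eval M w) es)"
| "eval M w (Eq a b) = (if eval M w a = eval M w b then tt M else ff M)"
| "eval M w FALSE = ff M"
| "eval M w (Imp a b) = (if eval M w a \<noteq> tt M \<or> eval M w b = tt M then tt M else ff M)"
| "eval M w (All x a) =
     (if (\<forall>u. eval (M\<lparr>xi := (xi M)(x := u)\<rparr>) w a = tt M) then tt M else ff M)"
| "eval M w (Nabla a) = nab M {eval M w' a | w'. (w, w') \<in> acc M}"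
| "eval M w (Def k es) = undefined"

text \<open>Expansion of defined operators: d(e_1,...,e_n) is replaced by
  e[e_1/x_1,...,e_n/x_n] (with everything expanded).  U is the list of
  already expanded definitions.\<close>
fun expand :: "('x, 'v, 'o) defn list \<Rightarrow> ('x, 'v, 'o) expr \<Rightarrow> ('x, 'v, 'o) expr" where
  "expand U (RVar x) = RVar x"
| "expand U (FVar v) = FVar v"
| "expand U (Op p es) = Op p (map (expand U) es)"
| "expand U (Eq a b) = Eq (expand U a) (expand U b)"
| "expand U FALSE = FALSE"
| "expand U (Imp a b) = Imp (expand U a) (expand U b)"
| "expand U (All x a) = All x (expand U a)"
| "expand U (Nabla a) = Nabla (expand U a)"
| "expand U (Def k es) =
     (if k < length U then subst (snd (U ! k)) (mk_subst (fst (U ! k)) (map (expand U) es))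
      else Def k (map (expand U) es))"

definition unfold_defs :: "('x, 'v, 'o) defn list \<Rightarrow> ('x, 'v, 'o) defn list" where
  "unfold_defs D = foldl (\<lambda>U d. U @ [(fst d, expand U (snd d))]) [] D"

definition sem :: "('o, 'x, 'v, 'w, 'u) kmodel \<Rightarrow> ('x, 'v, 'o) defn list \<Rightarrow> 'w \<Rightarrow> ('x, 'v, 'o) expr \<Rightarrow> 'u" where
  "sem M D w e = eval M w (expand (unfold_defs D) e)"

end

theory Submission
  imports Defs
begin

fun eval2 :: "('o, 'x, 'v, 'w, 'u) kmodel \<Rightarrow> ('w \<Rightarrow> 'x \<Rightarrow> 'u) \<Rightarrow> 'w \<Rightarrow> ('x, 'v, 'o) expr \<Rightarrow> 'u" where
  "eval2 M \<rho> w (RVar x) = \<rho> w x"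
| "eval2 M \<rho> w (FVar v) = zeta M v w"
| "eval2 M \<rho> w (Op p es) = interp M p (map (eval2 M \<rho> w) es)"
| "eval2 M \<rho> w (Eq a b) = (if eval2 M \<rho> w a = eval2 M \<rho> w b then tt M else ff M)"
| "eval2 M \<rho> w FALSE = ff M"
| "eval2 M \<rho> w (Imp a b) = (if eval2 M \<rho> w a \<noteq> tt M \<or> eval2 M \<rho> w b = tt M then tt M else ff M)"
| "eval2 M \<rho> w (All x a) =
     (if (\<forall>u. eval2 M (\<lambda>w'. (\<rho> w')(x := u)) w a = tt M) then tt M else ff M)"
| "eval2 M \<rho> w (Nabla a) = nab M {eval2 M \<rho> w' a | w'. (w, w') \<in> acc M}"
| "eval2 M \<rho> w (Def k es) = undefined"


lemma eval2_xi: "eval2 (M\<lparr>xi := f\<rparr>) \<rho> w e = eval2 M \<rho> w e"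
proof (induction e arbitrary: \<rho> w)
  case (Op p es)
  then show ?case by (simp cong: map_cong)
next
  case (All x a)
  then show ?case by (simp add: fun_upd_def)
next
  case (Nabla a)
  then show ?case by simp
qed simp_all

lemma eval_eval2: "eval M w e = eval2 M (\<lambda>_. xi M) w e"
proof (induction e arbitrary: M w)
  case (Op p es)
  then show ?case by (simp cong: map_cong)
next
  case (All x a)
  then show ?case by (simp add: eval2_xi fun_upd_def)
next
  case (Nabla a)
  then show ?case by simp
qed simp_all

lemma coinc: "(\<And>w' z. z \<in> fv e \<Longrightarrow> \<rho>1 w' z = \<rho>2 w' z) \<Longrightarrow> eval2 M \<rho>1 w e = eval2 M \<rho>2 w e"
proof (induction e arbitrary: \<rho>1 \<rho>2 w)
  case (Op p es)
  have "map (eval2 M \<rho>1 w) es = map (eval2 M \<rho>2 w) es"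
  proof (rule map_cong[OF refl])
    fix e assume "e \<in> set es"
    then show "eval2 M \<rho>1 w e = eval2 M \<rho>2 w e"
      by (intro Op.IH) (use Op.prems in auto)
  qed
  then show ?case by (simp only: eval2.simps)
next
  case (All x a)
  have "\<And>u. eval2 M (\<lambda>w'. (\<rho>1 w')(x := u)) w a = eval2 M (\<lambda>w'. (\<rho>2 w')(x := u)) w a"
    by (rule All.IH) (use All.prems in auto)
  then show ?case by (simp only: eval2.simps)
next
  case (Nabla a)
  have "\<And>w'. eval2 M \<rho>1 w' a = eval2 M \<rho>2 w' a" by (rule Nabla.IH) (use Nabla.prems in auto)
  then show ?case by (simp only: eval2.simps)
next
  case (Eq a b)
  have "eval2 M \<rho>1 w a = eval2 M \<rho>2 w a" by (rule Eq.IH(1)) (use Eq.prems in auto)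
  moreover have "eval2 M \<rho>1 w b = eval2 M \<rho>2 w b" by (rule Eq.IH(2)) (use Eq.prems in auto)
  ultimately show ?case by (simp only: eval2.simps)
next
  case (Imp a b)
  have "eval2 M \<rho>1 w a = eval2 M \<rho>2 w a" by (rule Imp.IH(1)) (use Imp.prems in auto)
  moreover have "eval2 M \<rho>1 w b = eval2 M \<rho>2 w b" by (rule Imp.IH(2)) (use Imp.prems in auto)
  ultimately show ?case by (simp only: eval2.simps)
next
  case (RVar x) then show ?case by simp
qed (simp_all only: eval2.simps)

lemma finite_fv: "finite (fv e)"
  by (induction e) auto

lemma fv_subst: "fv (subst e \<sigma>) \<subseteq> (\<Union>z\<in>fv e. fv (\<sigma> z))"
proof (induction e arbitrary: \<sigma>)
  case (All x a)
  define y where "y = fresh_for x (\<Union>z\<in>fv a - {x}. fv (\<sigma> z))"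
  have "fv (subst a (\<sigma>(x := RVar y))) \<subseteq> (\<Union>z\<in>fv a. fv ((\<sigma>(x := RVar y)) z))" by (rule All.IH)
  then have "fv (subst a (\<sigma>(x := RVar y))) - {y} \<subseteq> (\<Union>z\<in>fv a - {x}. fv (\<sigma> z))"
    by (auto split: if_splits)
  then show ?case by (simp add: Let_def y_def[symmetric])
next
  case (Op p es) then show ?case by fastforce
next
  case (Def k es) then show ?case by fastforce
next
  case (Eq a b)
  have "fv (subst a \<sigma>) \<subseteq> (\<Union>z\<in>fv a. fv (\<sigma> z))" "fv (subst b \<sigma>) \<subseteq> (\<Union>z\<in>fv b. fv (\<sigma> z))" by (rule Eq.IH)+
  then show ?case by auto
next
  case (Imp a b)
  have "fv (subst a \<sigma>) \<subseteq> (\<Union>z\<in>fv a. fv (\<sigma> z))" "fv (subst b \<sigma>) \<subseteq> (\<Union>z\<in>fv b. fv (\<sigma> z))" by (rule Imp.IH)+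
  then show ?case by auto
qed auto

lemma fresh_for_notin: "infinite (UNIV :: 'x set) \<Longrightarrow> finite S \<Longrightarrow> fresh_for (x::'x) S \<notin> S"
  unfolding fresh_for_def using ex_new_if_finite by (metis (mono_tags, lifting) someI_ex)

lemma subst_lemma:
  assumes inf: "infinite (UNIV :: 'x set)"
  shows "eval2 M \<rho> w (subst (e::('x,'v,'o) expr) \<sigma>) = eval2 M (\<lambda>w' z. eval2 M \<rho> w' (\<sigma> z)) w e"
proof (induction e arbitrary: \<rho> \<sigma> w)
  case (Op p es)
  have "map (eval2 M \<rho> w) (map (\<lambda>e. subst e \<sigma>) es) = map (eval2 M (\<lambda>w' z. eval2 M \<rho> w' (\<sigma> z)) w) es"
    unfolding map_map by (rule map_cong[OF refl]) (simp add: Op.IH)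
  then show ?case by (simp only: eval2.simps subst.simps)
next
  case (Def k es) then show ?case by (simp only: eval2.simps subst.simps)
next
  case (All x a)
  define S where "S = (\<Union>z\<in>fv a - {x}. fv (\<sigma> z))"
  define y where "y = fresh_for x S"
  have fin: "finite S" unfolding S_def by (simp add: finite_fv)
  have y: "y \<notin> S" unfolding y_def by (rule fresh_for_notin[OF inf fin])
  have eq: "eval2 M (\<lambda>w'. (\<rho> w')(y := u)) w (subst a (\<sigma>(x := RVar y))) =
        eval2 M (\<lambda>w'. ((\<lambda>z. eval2 M \<rho> w' (\<sigma> z)))(x := u)) w a" for u
  proof -
    have "eval2 M (\<lambda>w'. (\<rho> w')(y := u)) w (subst a (\<sigma>(x := RVar y))) =
       eval2 M (\<lambda>w' z. eval2 M (\<lambda>w'. (\<rho> w')(y := u)) w' ((\<sigma>(x := RVar y)) z)) w a"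
      by (rule All.IH)
    also have "\<dots> = eval2 M (\<lambda>w'. ((\<lambda>z. eval2 M \<rho> w' (\<sigma> z)))(x := u)) w a"
    proof (rule coinc)
      fix w' z assume z: "z \<in> fv a"
      show "eval2 M (\<lambda>w'. (\<rho> w')(y := u)) w' ((\<sigma>(x := RVar y)) z) =
            ((\<lambda>z. eval2 M \<rho> w' (\<sigma> z))(x := u)) z"
      proof (cases "z = x")
        case True then show ?thesis by simp
      next
        case False
        then have "y \<notin> fv (\<sigma> z)" using y z unfolding S_def by auto
        then have "eval2 M (\<lambda>w'. (\<rho> w')(y := u)) w' (\<sigma> z) = eval2 M \<rho> w' (\<sigma> z)"
          by (intro coinc) auto
        then show ?thesis using False by simp
      qed
    qed
    finally show ?thesis .
  qed
  show ?case
    by (simp only: subst.simps Let_def S_def[symmetric] y_def[symmetric] eval2.simps eq)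
next
  case (Nabla a) then show ?case by (simp only: eval2.simps subst.simps)
next
  case (Eq a b) then show ?case by (simp only: eval2.simps subst.simps)
next
  case (Imp a b) then show ?case by (simp only: eval2.simps subst.simps)
qed (simp_all only: eval2.simps subst.simps)


lemma unfold_snoc: "unfold_defs (D @ [d]) = unfold_defs D @ [(fst d, expand (unfold_defs D) (snd d))]"
  unfolding unfold_defs_def by simp

lemma leib_snoc: "leib_flags (D @ [d]) = leib_flags D @ [map (\<lambda>p. \<not> nonleib (leib_flags D) p (snd d)) (fst d)]"
  unfolding leib_flags_def by simp

lemma unfold_length: "length (unfold_defs D) = length D"
  by (induction D rule: rev_induct) (simp_all add: unfold_snoc, simp add: unfold_defs_def)

lemma leib_length: "length (leib_flags D) = length D"
  by (induction D rule: rev_induct) (simp_all add: leib_snoc, simp add: leib_flags_def)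

lemma unfold_take: "unfold_defs (take k D) = take k (unfold_defs D)"
proof (induction D rule: rev_induct)
  case Nil then show ?case by (simp add: unfold_defs_def)
next
  case (snoc d D)
  show ?case
  proof (cases "k \<le> length D")
    case True
    then show ?thesis using snoc by (simp add: unfold_snoc unfold_length)
  next
    case False
    then show ?thesis by (simp add: unfold_length)
  qed
qed

lemma leib_take: "leib_flags (take k D) = take k (leib_flags D)"
proof (induction D rule: rev_induct)
  case Nil then show ?case by (simp add: leib_flags_def)
next
  case (snoc d D)
  show ?case
  proof (cases "k \<le> length D")
    case True
    then show ?thesis using snoc by (simp add: leib_snoc leib_length)
  next
    case False
    then show ?thesis by (simp add: leib_length)
  qed
qed

lemma unfold_nth: "k < length D \<Longrightarrow>
   unfold_defs D ! k = (fst (D ! k), expand (take k (unfold_defs D)) (snd (D ! k)))"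
proof -
  assume k: "k < length D"
  have "take (Suc k) (unfold_defs D) = unfold_defs (take (Suc k) D)" by (simp add: unfold_take)
  also have "take (Suc k) D = take k D @ [D ! k]" using k by (simp add: take_Suc_conv_app_nth)
  finally have "take (Suc k) (unfold_defs D) = take k (unfold_defs D) @ [(fst (D ! k), expand (take k (unfold_defs D)) (snd (D ! k)))]"
    by (simp add: unfold_snoc unfold_take)
  then show ?thesis using k
    by (metis length_take min.absorb4 nth_append_length nth_take lessI unfold_length)
qed

lemma leib_nth: "k < length D \<Longrightarrow>
   leib_flags D ! k = map (\<lambda>p. \<not> nonleib (take k (leib_flags D)) p (snd (D ! k))) (fst (D ! k))"
proof -
  assume k: "k < length D"
  have "take (Suc k) (leib_flags D) = leib_flags (take (Suc k) D)" by (simp add: leib_take)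
  also have "take (Suc k) D = take k D @ [D ! k]" using k by (simp add: take_Suc_conv_app_nth)
  finally have "take (Suc k) (leib_flags D) = take k (leib_flags D) @ [map (\<lambda>p. \<not> nonleib (take k (leib_flags D)) p (snd (D ! k))) (fst (D ! k))]"
    by (simp add: leib_snoc leib_take)
  then show ?thesis using k
    by (metis length_take min.absorb4 nth_append_length nth_take lessI leib_length)
qed

lemma unfold_fst: "k < length D \<Longrightarrow> fst (unfold_defs D ! k) = fst (D ! k)"
  by (simp add: unfold_nth)

lemma def_arities_unfold: "def_arities (unfold_defs D) = def_arities D"
  unfolding def_arities_def by (rule nth_equalityI) (simp_all add: unfold_length unfold_fst)

lemma mk_subst_nth: "length xs = length A \<Longrightarrow> z \<in> set xs \<Longrightarrow>
  \<exists>j<length xs. xs ! j = z \<and> mk_subst xs A z = A ! j"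
proof (induction xs arbitrary: A)
  case Nil then show ?case by simp
next
  case (Cons a xs)
  then obtain b B where A: "A = b # B" by (cases A) auto
  show ?case
  proof (cases "a = z")
    case True
    then show ?thesis using A by (auto simp: mk_subst_def intro!: exI[of _ 0])
  next
    case False
    then have "z \<in> set xs" "length xs = length B" using Cons.prems A by auto
    then obtain j where "j < length xs" "xs ! j = z" "mk_subst xs B z = B ! j" using Cons.IH by blast
    then show ?thesis using A False by (auto simp: mk_subst_def intro!: exI[of _ "Suc j"])
  qed
qed

definition UB :: "('x, 'v, 'o) defn list \<Rightarrow> bool" where
  "UB U = (\<forall>k<length U. fv (snd (U ! k)) \<subseteq> set (fst (U ! k)))"

lemma fv_expand: "wf_expr ar (def_arities U) e \<Longrightarrow> UB U \<Longrightarrow> fv (expand U e) \<subseteq> fv e"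
proof (induction e)
  case (Op p es)
  then show ?case by fastforce
next
  case (Def k es)
  show ?case
  proof (cases "k < length U")
    case False then show ?thesis using Def by fastforce
  next
    case True
    let ?xs = "fst (U ! k)" and ?A = "map (expand U) es"
    have len: "length ?xs = length ?A" using Def.prems True by (simp add: def_arities_def)
    have "fv (expand U (Def k es)) = fv (subst (snd (U ! k)) (mk_subst ?xs ?A))" using True by simp
    also have "\<dots> \<subseteq> (\<Union>z\<in>fv (snd (U ! k)). fv (mk_subst ?xs ?A z))" by (rule fv_subst)
    also have "\<dots> \<subseteq> fv (Def k es)"
    proof (rule UN_least)
      fix z assume "z \<in> fv (snd (U ! k))"
      then have "z \<in> set ?xs" using Def.prems(2) True by (auto simp: UB_def)
      then obtain j where j: "j < length ?xs" "mk_subst ?xs ?A z = ?A ! j"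
        using mk_subst_nth[OF len] by blast
      then have jl: "j < length es" using len by simp
      then have "es ! j \<in> set es" by simp
      then have "fv (expand U (es ! j)) \<subseteq> fv (es ! j)" using Def by auto
      then show "fv (mk_subst ?xs ?A z) \<subseteq> fv (Def k es)" using j jl \<open>es ! j \<in> set es\<close> by fastforce
    qed
    finally show ?thesis .
  qed
qed auto


definition semL :: "('o, 'x, 'v, 'w, 'u) kmodel \<Rightarrow> ('x, 'v, 'o) expr \<Rightarrow> 'x set \<Rightarrow> bool" where
  "semL M B Y = (\<forall>\<rho>1 \<rho>2 w. (\<forall>z\<in>fv B. \<rho>1 w z = \<rho>2 w z) \<longrightarrow> (\<forall>w'. \<forall>z\<in>fv B - Y. \<rho>1 w' z = \<rho>2 w' z)
      \<longrightarrow> eval2 M \<rho>1 w B = eval2 M \<rho>2 w B)"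

definition HL :: "('o, 'x, 'v, 'w, 'u) kmodel \<Rightarrow> ('x, 'v, 'o) defn list \<Rightarrow> bool list list \<Rightarrow> bool" where
  "HL M U L = (\<forall>k<length U. \<forall>Y. (\<forall>p\<in>Y. \<exists>j. j < length (fst (U ! k)) \<and> j < length (L ! k) \<and> L ! k ! j \<and> p = fst (U ! k) ! j)
      \<longrightarrow> semL M (snd (U ! k)) Y)"

lemma leib_main:
  fixes U :: "('x, 'v, 'o) defn list"
  assumes H: "HL M U L" and ub: "UB U" and inf: "infinite (UNIV :: 'x set)"
  shows "wf_expr ar (def_arities U) e \<Longrightarrow> (\<forall>y\<in>Y. \<not> nonleib L y e) \<Longrightarrow>
    (\<forall>z\<in>fv e. \<rho>1 w z = \<rho>2 w z) \<Longrightarrow> (\<forall>w'. \<forall>z\<in>fv e - Y. \<rho>1 w' z = \<rho>2 w' z) \<Longrightarrow>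
    eval2 M \<rho>1 w (expand U e) = eval2 M \<rho>2 w (expand U e)"
proof (induction e arbitrary: Y \<rho>1 \<rho>2 w)
  case (RVar x) then show ?case by simp
next
  case (FVar v) then show ?case by simp
next
  case FALSE then show ?case by simp
next
  case (Op p es)
  have "map (eval2 M \<rho>1 w) (map (expand U) es) = map (eval2 M \<rho>2 w) (map (expand U) es)"
    unfolding map_map
  proof (rule map_cong[OF refl])
    fix e assume e: "e \<in> set es"
    show "(eval2 M \<rho>1 w \<circ> expand U) e = (eval2 M \<rho>2 w \<circ> expand U) e"
      unfolding o_def
      by (rule Op.IH[OF e, of Y]) (use Op.prems e in fastforce)+
  qed
  then show ?case by (simp only: eval2.simps expand.simps)
next
  case (Eq a b)
  have "eval2 M \<rho>1 w (expand U a) = eval2 M \<rho>2 w (expand U a)"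
    by (rule Eq.IH(1)[of Y]) (use Eq.prems in auto)
  moreover have "eval2 M \<rho>1 w (expand U b) = eval2 M \<rho>2 w (expand U b)"
    by (rule Eq.IH(2)[of Y]) (use Eq.prems in auto)
  ultimately show ?case by (simp only: eval2.simps expand.simps)
next
  case (Imp a b)
  have "eval2 M \<rho>1 w (expand U a) = eval2 M \<rho>2 w (expand U a)"
    by (rule Imp.IH(1)[of Y]) (use Imp.prems in auto)
  moreover have "eval2 M \<rho>1 w (expand U b) = eval2 M \<rho>2 w (expand U b)"
    by (rule Imp.IH(2)[of Y]) (use Imp.prems in auto)
  ultimately show ?case by (simp only: eval2.simps expand.simps)
next
  case (All x a)
  have "eval2 M (\<lambda>w'. (\<rho>1 w')(x := u)) w (expand U a) = eval2 M (\<lambda>w'. (\<rho>2 w')(x := u)) w (expand U a)" for u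
    by (rule All.IH[of "Y - {x}"]) (use All.prems in auto)
  then show ?case by (simp only: eval2.simps expand.simps)
next
  case (Nabla a)
  have nY: "\<forall>y\<in>Y. y \<notin> fv a" using Nabla.prems by simp
  have "eval2 M \<rho>1 w' (expand U a) = eval2 M \<rho>2 w' (expand U a)" for w'
  proof (rule coinc)
    fix w'' z assume "z \<in> fv (expand U a)"
    then have "z \<in> fv a" using fv_expand[OF _ ub, of ar a] Nabla.prems by auto
    then show "\<rho>1 w'' z = \<rho>2 w'' z" using nY Nabla.prems by auto
  qed
  then show ?case by (simp only: eval2.simps expand.simps)
next
  case (Def k es)
  show ?case
  proof (cases "k < length U")
    case False then show ?thesis by (simp only: eval2.simps expand.simps if_False)
  next
    case True
    let ?xs = "fst (U ! k)" and ?A = "map (expand U) es" and ?B = "snd (U ! k)"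
    have len: "length ?xs = length ?A" using Def.prems True by (simp add: def_arities_def)
    let ?Y' = "{?xs ! j | j. j < length es \<and> (\<exists>y\<in>Y. y \<in> fv (es ! j))}"
    define \<rho>1' where "\<rho>1' = (\<lambda>w' z. eval2 M \<rho>1 w' (mk_subst ?xs ?A z))"
    define \<rho>2' where "\<rho>2' = (\<lambda>w' z. eval2 M \<rho>2 w' (mk_subst ?xs ?A z))"
    have sL: "semL M ?B ?Y'"
      using H True unfolding HL_def
    proof (elim allE impE)
      show "\<forall>p\<in>?Y'. \<exists>j. j < length ?xs \<and> j < length (L ! k) \<and> L ! k ! j \<and> p = ?xs ! j"
      proof
        fix p assume "p \<in> ?Y'"
        then obtain j y where j: "j < length es" "y \<in> Y" "y \<in> fv (es ! j)" "p = ?xs ! j" by blast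
        have "\<not> nonleib L y (Def k es)" using Def.prems j by blast
        then have "k < length L \<and> j < length (L ! k) \<and> L ! k ! j" using j by auto
        then show "\<exists>j. j < length ?xs \<and> j < length (L ! k) \<and> L ! k ! j \<and> p = ?xs ! j"
          using j len by auto
      qed
    qed (use True in auto)
    have hw: "\<forall>z\<in>fv ?B. \<rho>1' w z = \<rho>2' w z"
    proof
      fix z assume "z \<in> fv ?B"
      then have "z \<in> set ?xs" using ub True by (auto simp: UB_def)
      then obtain j where j: "j < length ?xs" "?xs ! j = z" "mk_subst ?xs ?A z = ?A ! j"
        using mk_subst_nth[OF len] by blast
      then have jl: "j < length es" using len by simp
      then have ej: "es ! j \<in> set es" by simp
      have "eval2 M \<rho>1 w (expand U (es ! j)) = eval2 M \<rho>2 w (expand U (es ! j))"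
        by (rule Def.IH[OF ej, of Y]) (use Def.prems ej in fastforce)+
      then show "\<rho>1' w z = \<rho>2' w z" unfolding \<rho>1'_def \<rho>2'_def using j jl by simp
    qed
    have ho: "\<forall>w'. \<forall>z\<in>fv ?B - ?Y'. \<rho>1' w' z = \<rho>2' w' z"
    proof (intro allI ballI)
      fix w' z assume z: "z \<in> fv ?B - ?Y'"
      then have "z \<in> set ?xs" using ub True by (auto simp: UB_def)
      then obtain j where j: "j < length ?xs" "?xs ! j = z" "mk_subst ?xs ?A z = ?A ! j"
        using mk_subst_nth[OF len] by blast
      then have jl: "j < length es" using len by simp
      then have ej: "es ! j \<in> set es" by simp
      have nY: "\<forall>y\<in>Y. y \<notin> fv (es ! j)" using z j jl by blast
      have wfj: "wf_expr ar (def_arities U) (es ! j)" using Def.prems ej by auto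
      have "eval2 M \<rho>1 w' (expand U (es ! j)) = eval2 M \<rho>2 w' (expand U (es ! j))"
      proof (rule coinc)
        fix w'' z' assume "z' \<in> fv (expand U (es ! j))"
        then have "z' \<in> fv (es ! j)" using fv_expand[OF wfj ub] by auto
        then have "z' \<in> fv (Def k es) - Y" using nY ej by auto
        then show "\<rho>1 w'' z' = \<rho>2 w'' z'" using Def.prems(4) by blast
      qed
      then show "\<rho>1' w' z = \<rho>2' w' z" unfolding \<rho>1'_def \<rho>2'_def using j jl by simp
    qed
    have "eval2 M \<rho>1' w ?B = eval2 M \<rho>2' w ?B" using sL hw ho unfolding semL_def by blast
    moreover have "eval2 M \<rho>1 w (subst ?B (mk_subst ?xs ?A)) = eval2 M \<rho>1' w ?B"
      unfolding \<rho>1'_def by (rule subst_lemma[OF inf])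
    moreover have "eval2 M \<rho>2 w (subst ?B (mk_subst ?xs ?A)) = eval2 M \<rho>2' w ?B"
      unfolding \<rho>2'_def by (rule subst_lemma[OF inf])
    ultimately show ?thesis using True by simp
  qed
qed


lemma def_arities_take: "def_arities (take m (unfold_defs D)) = def_arities (take m D)"
  by (metis def_arities_unfold unfold_take)

lemma UB_unfold:
  assumes wf: "wf_defs ar D"
  shows "UB (unfold_defs D)"
proof -
  have "k < length D \<longrightarrow> fv (snd (unfold_defs D ! k)) \<subseteq> set (fst (unfold_defs D ! k))" for k
  proof (induction k rule: less_induct)
    case (less k)
    show ?case
    proof
      assume k: "k < length D"
      let ?U = "take k (unfold_defs D)"
      have ub: "UB ?U" unfolding UB_def using less k by (simp add: unfold_length)
      have wfb: "wf_expr ar (def_arities ?U) (snd (D ! k))"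
        using wf k unfolding wf_defs_def by (simp add: def_arities_take)
      have "fv (snd (unfold_defs D ! k)) = fv (expand ?U (snd (D ! k)))" using k by (simp add: unfold_nth)
      also have "\<dots> \<subseteq> fv (snd (D ! k))" by (rule fv_expand[OF wfb ub])
      also have "\<dots> \<subseteq> set (fst (D ! k))" using wf k unfolding wf_defs_def by blast
      finally show "fv (snd (unfold_defs D ! k)) \<subseteq> set (fst (unfold_defs D ! k))" using k by (simp add: unfold_nth)
    qed
  qed
  then show ?thesis unfolding UB_def by (simp add: unfold_length)
qed

lemma HL_unfold:
  fixes D :: "('x, 'v, 'o) defn list" and M :: "('o, 'x, 'v, 'w, 'u) kmodel"
  assumes wf: "wf_defs ar D" and inf: "infinite (UNIV :: 'x set)"
  shows "HL M (unfold_defs D) (leib_flags D)"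
proof -
  let ?U = "unfold_defs D" and ?L = "leib_flags D"
  have ubU: "UB ?U" by (rule UB_unfold[OF wf])
  have "m < length D \<longrightarrow> (\<forall>Y. (\<forall>p\<in>Y. \<exists>j. j < length (fst (?U ! m)) \<and> j < length (?L ! m) \<and> ?L ! m ! j \<and> p = fst (?U ! m) ! j)
      \<longrightarrow> semL M (snd (?U ! m)) Y)" for m
  proof (induction m rule: less_induct)
    case (less m)
    show ?case
    proof (intro impI allI)
      fix Y
      assume m: "m < length D"
        and cond: "\<forall>p\<in>Y. \<exists>j. j < length (fst (?U ! m)) \<and> j < length (?L ! m) \<and> ?L ! m ! j \<and> p = fst (?U ! m) ! j"
      let ?Um = "take m ?U" and ?Lm = "take m ?L" and ?b = "snd (D ! m)"
      have HLm: "HL M ?Um ?Lm" unfolding HL_def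
        using less m by (simp add: unfold_length leib_length)
      have ubm: "UB ?Um" using ubU m unfolding UB_def by (simp add: unfold_length)
      have wfb: "wf_expr ar (def_arities ?Um) ?b"
        using wf m unfolding wf_defs_def by (simp add: def_arities_take)
      have B: "snd (?U ! m) = expand ?Um ?b" using m by (simp add: unfold_nth)
      have nl: "\<forall>y\<in>Y. \<not> nonleib ?Lm y ?b"
      proof
        fix y assume "y \<in> Y"
        then obtain j where j: "j < length (fst (?U ! m))" "?L ! m ! j" "y = fst (?U ! m) ! j"
          using cond by blast
        then show "\<not> nonleib ?Lm y ?b" using m by (simp add: leib_nth unfold_fst)
      qed
      show "semL M (snd (?U ! m)) Y"
        unfolding semL_def
      proof (intro allI impI)
        fix \<rho>1 \<rho>2 :: "'w \<Rightarrow> 'x \<Rightarrow> 'u" and w :: 'w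
        assume h1: "\<forall>z\<in>fv (snd (?U ! m)). \<rho>1 w z = \<rho>2 w z"
          and h2: "\<forall>w'. \<forall>z\<in>fv (snd (?U ! m)) - Y. \<rho>1 w' z = \<rho>2 w' z"
        define \<rho>3 where "\<rho>3 = (\<lambda>w' z. if z \<in> fv (snd (?U ! m)) then \<rho>2 w' z else \<rho>1 w' z)"
        have "eval2 M \<rho>2 w (snd (?U ! m)) = eval2 M \<rho>3 w (snd (?U ! m))"
          by (rule coinc) (simp add: \<rho>3_def)
        moreover have "eval2 M \<rho>1 w (expand ?Um ?b) = eval2 M \<rho>3 w (expand ?Um ?b)"
          by (rule leib_main[OF HLm ubm inf wfb nl]) (use h1 h2 B in \<open>auto simp: \<rho>3_def\<close>)
        ultimately show "eval2 M \<rho>1 w (snd (?U ! m)) = eval2 M \<rho>2 w (snd (?U ! m))" using B by simp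
      qed
    qed
  qed
  then show ?thesis unfolding HL_def by (simp add: unfold_length)
qed

theorem lemma2:
  fixes ar :: "'o \<Rightarrow> nat"
    and D :: "('x, 'v, 'o) defn list"
    and k i :: nat
    and es :: "('x, 'v, 'o) expr list"
    and M :: "('o, 'x, 'v, 'w, 'u) kmodel"
    and w :: 'w
    and x :: 'x
  assumes "infinite (UNIV :: 'x set)" and "countable (UNIV :: 'x set)"
    and "infinite (UNIV :: 'v set)" and "countable (UNIV :: 'v set)"
    and "infinite (UNIV :: 'o set)" and "countable (UNIV :: 'o set)"
    and "wf_defs ar D"
    and "k < length D"
    and "leibniz D k i"
    and "length es = length (fst (D ! k))"
    and "\<forall>e\<in>set es. wf_expr ar (def_arities D) e"
    and "kripke_model M"
    and "w \<in> states M"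
    and "\<forall>e\<in>set es. x \<notin> fv e"
  shows "sem M D w (Def k es) =
         sem (M\<lparr>xi := (xi M)(x := sem M D w (es ! i))\<rparr>) D w (Def k (es[i := RVar x]))"
proof -
  let ?U = "unfold_defs D" and ?L = "leib_flags D"
  let ?xs = "fst (?U ! k)" and ?B = "snd (?U ! k)"
  let ?A = "map (expand ?U) es" and ?A' = "map (expand ?U) (es[i := RVar x])"
  define v where "v = sem M D w (es ! i)"
  define M' where "M' = M\<lparr>xi := (xi M)(x := v)\<rparr>"
  have kU: "k < length ?U" using assms(8) by (simp add: unfold_length)
  have xsD: "?xs = fst (D ! k)" using assms(8) by (simp add: unfold_fst)
  have il: "i < length ?xs" and flag: "?L ! k ! i" using assms(9) xsD unfolding leibniz_def by auto
  have lenL: "length (?L ! k) = length ?xs" using assms(8) xsD by (simp add: leib_nth)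
  have len: "length ?xs = length ?A" using assms(10) xsD by simp
  have len': "length ?xs = length ?A'" using assms(10) xsD by simp
  have A': "?A' = ?A[i := RVar x]" by (simp add: map_update)
  have ub: "UB ?U" by (rule UB_unfold[OF assms(7)])
  have ar: "def_arities ?U = def_arities D" by (rule def_arities_unfold)
  define \<rho>1 where "\<rho>1 = (\<lambda>w' z. eval2 M (\<lambda>_. xi M) w' (mk_subst ?xs ?A z))"
  define \<rho>2 where "\<rho>2 = (\<lambda>w' z. eval2 M (\<lambda>_. xi M') w' (mk_subst ?xs ?A' z))"
  have L: "sem M D w (Def k es) = eval2 M \<rho>1 w ?B"
    unfolding sem_def eval_eval2 \<rho>1_def using kU
    by (simp only: expand.simps if_True subst_lemma[OF assms(1)])
  have R: "sem M' D w (Def k (es[i := RVar x])) = eval2 M \<rho>2 w ?B"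
  proof -
    have "sem M' D w (Def k (es[i := RVar x])) = eval2 M' (\<lambda>_. xi M') w (subst ?B (mk_subst ?xs ?A'))"
      unfolding sem_def eval_eval2 using kU by simp
    also have "\<dots> = eval2 M (\<lambda>_. xi M') w (subst ?B (mk_subst ?xs ?A'))"
      unfolding M'_def by (rule eval2_xi)
    also have "\<dots> = eval2 M \<rho>2 w ?B" unfolding \<rho>2_def by (rule subst_lemma[OF assms(1)])
    finally show ?thesis .
  qed
  have cond: "\<forall>p\<in>{?xs ! i}. \<exists>j. j < length ?xs \<and> j < length (?L ! k) \<and> ?L ! k ! j \<and> p = ?xs ! j"
    using il flag lenL by auto
  have sL: "semL M ?B {?xs ! i}"
    using HL_unfold[OF assms(7) assms(1), of M] kU cond unfolding HL_def by blast
  have other: "\<rho>1 w' z = \<rho>2 w' z" if z: "z \<in> fv ?B" and j: "j < length ?xs" "?xs ! j = z"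
      "mk_subst ?xs ?A z = ?A ! j" "mk_subst ?xs ?A' z = ?A' ! j" and ji: "j \<noteq> i" for w' z j
  proof -
    have jl: "j < length es" using j assms(10) xsD by simp
    then have ej: "es ! j \<in> set es" by simp
    have wfj: "wf_expr ar (def_arities ?U) (es ! j)" using assms(11) ej ar by simp
    have xn: "x \<notin> fv (es ! j)" using assms(14) ej by blast
    have "?A' ! j = ?A ! j" using A' ji by simp
    moreover have "eval2 M (\<lambda>_. xi M) w' (?A ! j) = eval2 M (\<lambda>_. xi M') w' (?A ! j)"
    proof (rule coinc)
      fix w'' z' assume "z' \<in> fv (?A ! j)"
      then have "z' \<in> fv (es ! j)" using fv_expand[OF wfj ub] jl by auto
      then show "xi M z' = xi M' z'" using xn unfolding M'_def by auto
    qed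
    ultimately show ?thesis unfolding \<rho>1_def \<rho>2_def using j by simp
  qed
  have getj: "\<exists>j<length ?xs. ?xs ! j = z \<and> mk_subst ?xs ?A z = ?A ! j \<and> mk_subst ?xs ?A' z = ?A' ! j"
    if "z \<in> fv ?B" for z
  proof -
    have zs: "z \<in> set ?xs" using that ub kU by (auto simp: UB_def)
    obtain j where j: "j < length ?xs" "?xs ! j = z" "mk_subst ?xs ?A z = ?A ! j"
      using mk_subst_nth[OF len zs] by blast
    obtain j' where j': "j' < length ?xs" "?xs ! j' = z" "mk_subst ?xs ?A' z = ?A' ! j'"
      using mk_subst_nth[OF len' zs] by blast
    have "j = j'"
    proof -
      have dist: "distinct ?xs" using assms(7) assms(8) xsD unfolding wf_defs_def by simp
      show ?thesis using j j' dist by (metis nth_eq_iff_index_eq)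
    qed
    then show ?thesis using j j' by blast
  qed
  have h1: "\<forall>z\<in>fv ?B. \<rho>1 w z = \<rho>2 w z"
  proof
    fix z assume z: "z \<in> fv ?B"
    then obtain j where j: "j < length ?xs" "?xs ! j = z" "mk_subst ?xs ?A z = ?A ! j" "mk_subst ?xs ?A' z = ?A' ! j"
      using getj by blast
    show "\<rho>1 w z = \<rho>2 w z"
    proof (cases "j = i")
      case False then show ?thesis using other[OF z j] by blast
    next
      case True
      have ies: "i < length es" using il assms(10) xsD by simp
      have "\<rho>2 w z = xi M' x" unfolding \<rho>2_def using j True A' len ies by simp
      also have "\<dots> = v" unfolding M'_def by simp
      also have "\<dots> = eval2 M (\<lambda>_. xi M) w (?A ! i)" unfolding v_def sem_def eval_eval2 using ies by simp
      also have "\<dots> = \<rho>1 w z" unfolding \<rho>1_def using j True by simp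
      finally show ?thesis by simp
    qed
  qed
  have h2: "\<forall>w'. \<forall>z\<in>fv ?B - {?xs ! i}. \<rho>1 w' z = \<rho>2 w' z"
  proof (intro allI ballI)
    fix w' z assume z: "z \<in> fv ?B - {?xs ! i}"
    then obtain j where j: "j < length ?xs" "?xs ! j = z" "mk_subst ?xs ?A z = ?A ! j" "mk_subst ?xs ?A' z = ?A' ! j"
      using getj by blast
    then have "j \<noteq> i" using z by auto
    then show "\<rho>1 w' z = \<rho>2 w' z" using other j z by blast
  qed
  have "eval2 M \<rho>1 w ?B = eval2 M \<rho>2 w ?B" using sL h1 h2 unfolding semL_def by blast
  then show ?thesis using L R unfolding M'_def v_def by simp
qed

end
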